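(* Let $\alpha\in(0,1]$, $F\in C^{1,\alpha}_{\mathsf h}(\mathbb H,\mathbb R^2)$ and $p\in\mathbb H$ nondegenerate for $F$. Let $F_{p,r}(q):=\big(F(p\,\delta_r(q))-F(p)\big)/r$ for $r>0$ and $F_{p,0}(q):=L(q):=\nabla_{\mathsf h}F(p)\,q^{\mathsf h}$. Then for every $\varepsilon>0$ and every compact $K\subseteq L(B(0,\varepsilon))$ there exists $\bar r>0$ such that $K\subseteq F_{p,r}(B(0,\varepsilon))$ for every $r\in[0,\bar r]$.
   Context: The Heisenberg group $\mathbb H$ is $\mathbb R^3$ with product $(x^1,x^2,x^3)(y^1,y^2,y^3)=(x^1+y^1,x^2+y^2,x^3+y^3+x^1y^2-x^2y^1)$; $x^{\mathsf h}=(x^1,x^2)$. Dilations $\delta_r(x)=(rx^1,rx^2,r^2x^3)$. $\mathsf d$ is a fixed left-invariant, $1$-homogeneous distance on $\mathbb H$; $B(x,r)$ is the open $\mathsf d$-ball. $X_1=\partial_1-x^2\partial_3$, $X_2=\partial_2+x^1\partial_3$. $C^{1,\alpha}_{\mathsf h}(\mathbb H,\mathbb R^2)$: maps $F$ with $X_1F,X_2F$ existing everywhere and $\nabla_{\mathsf h}F=[X_1F,X_2F]$ $\alpha$-Hölder w.r.t. $\mathsf d$ on bounded sets. $p$ nondegenerate: $\nabla_{\mathsf h}F(p)$ invertible. *)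

theory Defs
  imports "HOL-Analysis.Analysis"
begin

text \<open>Heisenberg group modelled on real^3.\<close>

definition hmul :: "real^3 \<Rightarrow> real^3 \<Rightarrow> real^3" where
  "hmul x y = vector [x$1 + y$1, x$2 + y$2, x$3 + y$3 + x$1 * y$2 - x$2 * y$1]"

definition hdil :: "real \<Rightarrow> real^3 \<Rightarrow> real^3" where
  "hdil r x = vector [r * x$1, r * x$2, r^2 * x$3]"

definition horiz :: "real^3 \<Rightarrow> real^2" where
  "horiz x = vector [x$1, x$2]"

definition hom_dist :: "(real^3 \<Rightarrow> real^3 \<Rightarrow> real) \<Rightarrow> bool" where
  "hom_dist d \<longleftrightarrow>
     (\<forall>x y. d x y = 0 \<longleftrightarrow> x = y) \<and>
     (\<forall>x y. d x y = d y x) \<and>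
     (\<forall>x y z. d x z \<le> d x y + d y z) \<and>
     (\<forall>x y z. d (hmul z x) (hmul z y) = d x y) \<and>
     (\<forall>r x y. r > 0 \<longrightarrow> d (hdil r x) (hdil r y) = r * d x y)"

definition dball :: "(real^3 \<Rightarrow> real^3 \<Rightarrow> real) \<Rightarrow> real^3 \<Rightarrow> real \<Rightarrow> (real^3) set" where
  "dball d x r = {y. d x y < r}"

definition d_bounded :: "(real^3 \<Rightarrow> real^3 \<Rightarrow> real) \<Rightarrow> (real^3) set \<Rightarrow> bool" where
  "d_bounded d S \<longleftrightarrow> (\<exists>R. \<forall>x\<in>S. \<forall>y\<in>S. d x y \<le> R)"

text \<open>Horizontal derivatives: X_j F (x) = d/dt F(x * (t e_j)) at t = 0,
  so X_1 = \<partial>_1 - x^2 \<partial>_3 and X_2 = \<partial>_2 + x^1 \<partial>_3.\<close>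
definition Xder :: "(real^3 \<Rightarrow> real^2) \<Rightarrow> 3 \<Rightarrow> real^3 \<Rightarrow> real^2" where
  "Xder F j x = vector_derivative (\<lambda>t. F (hmul x (t *\<^sub>R axis j 1))) (at 0)"

definition hgrad :: "(real^3 \<Rightarrow> real^2) \<Rightarrow> real^3 \<Rightarrow> real^2^2" where
  "hgrad F x = (\<chi> i k. (if k = 1 then Xder F 1 x else Xder F 2 x) $ i)"

definition C1alpha_h :: "(real^3 \<Rightarrow> real^3 \<Rightarrow> real) \<Rightarrow> real \<Rightarrow> (real^3 \<Rightarrow> real^2) \<Rightarrow> bool" where
  "C1alpha_h d \<alpha> F \<longleftrightarrow>
     (\<forall>x. (\<lambda>t. F (hmul x (t *\<^sub>R axis 1 1))) differentiable (at (0::real)) \<and>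
          (\<lambda>t. F (hmul x (t *\<^sub>R axis 2 1))) differentiable (at (0::real))) \<and>
     (\<forall>S. d_bounded d S \<longrightarrow>
        (\<exists>C. \<forall>x\<in>S. \<forall>y\<in>S. norm (hgrad F x - hgrad F y) \<le> C * d x y powr \<alpha>))"

definition Fpr :: "(real^3 \<Rightarrow> real^2) \<Rightarrow> real^3 \<Rightarrow> real \<Rightarrow> real^3 \<Rightarrow> real^2" where
  "Fpr F p r q = (if r = 0 then hgrad F p *v horiz q
                  else (1 / r) *\<^sub>R (F (hmul p (hdil r q)) - F p))"

end

theory Submission
  imports Defs
begin


lemma hmul_c: "hmul x y $ 1 = x$1 + y$1" "hmul x y $ 2 = x$2 + y$2"
  "hmul x y $ 3 = x$3 + y$3 + x$1 * y$2 - x$2 * y$1"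
  by (simp_all add: hmul_def)
lemma hdil_c: "hdil r x $ 1 = r * x$1" "hdil r x $ 2 = r * x$2" "hdil r x $ 3 = r^2 * x$3"
  by (simp_all add: hdil_def)
lemma ax_c: "(h *\<^sub>R axis (1::3) (1::real)) $ 1 = h" "(h *\<^sub>R axis (1::3) (1::real)) $ 2 = 0"
   "(h *\<^sub>R axis (1::3) (1::real)) $ 3 = 0"
   "(h *\<^sub>R axis (2::3) (1::real)) $ 1 = 0" "(h *\<^sub>R axis (2::3) (1::real)) $ 2 = h"
   "(h *\<^sub>R axis (2::3) (1::real)) $ 3 = 0"
  by (simp_all add: axis_def)
lemma horiz_c: "horiz x $ 1 = x$1" "horiz x $ 2 = x$2" by (simp_all add: horiz_def)

fun psteps :: "real^3 \<Rightarrow> (3 \<times> real) list \<Rightarrow> real^3" where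
  "psteps y [] = y"
| "psteps y ((i,h)#xs) = psteps (hmul y (h *\<^sub>R axis i 1)) xs"

lemma psteps_append: "psteps y (xs @ ys) = psteps (psteps y xs) ys"
  by (induction y xs rule: psteps.induct) auto

lemma test: "hmul p (hdil r (hmul q (hmul (s *\<^sub>R axis 1 1) (t *\<^sub>R axis 2 1)))) =
  psteps p [(1, r*q$1), (2, r*q$2), (1, r), (2, r*((q$3 - q$1*q$2)/2)), (1, -r), (2, -r*((q$3 - q$1*q$2)/2)), (1, r * s), (2::3, r*t)]"
  by (simp add: vec_eq_iff forall_3 hmul_c hdil_c axis_def power2_eq_square field_simps)


lemma path_cont_eq: assumes "u * v = (w1' - w1) * w2'"
  shows "psteps (psteps x [(1,w1),(2,w2)]) [(2, w2'-w2), (1, w1'-w1), (1,u), (2,v), (1,-u), (2,-v)] = psteps x [(1,w1'),(2,w2')]"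
proof -
  have "2 * u * v = 2 * (w1' - w1) * w2'" using assms by (simp add: mult.assoc)
  then show ?thesis
  by (simp add: vec_eq_iff forall_3 hmul_c axis_def field_simps)
qed

lemma hmul_0[simp]: "hmul x 0 = x" by (simp add: vec_eq_iff forall_3 hmul_c)

lemma d_nonneg: assumes "hom_dist d" shows "d x y \<ge> 0"
proof -
  have "d x x \<le> d x y + d y x" "d x x = 0" using assms unfolding hom_dist_def by blast+
  moreover have "d y x = d x y" using assms unfolding hom_dist_def by blast
  ultimately show ?thesis by linarith
qed

lemma d_left: assumes "hom_dist d" shows "d y (hmul y w) = d 0 w"
proof -
  have "d (hmul y 0) (hmul y w) = d 0 w" using assms unfolding hom_dist_def by blast
  thus ?thesis by simp
qed

lemma d_stepR: assumes "hom_dist d" shows "d p (hmul y w) \<le> d p y + d 0 w"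
proof -
  have "d p (hmul y w) \<le> d p y + d y (hmul y w)" using assms unfolding hom_dist_def by blast
  thus ?thesis using d_left[OF assms] by simp
qed

lemma N_axis: assumes "hom_dist d" "i = 1 \<or> i = 2"
  shows "d 0 (\<tau> *\<^sub>R axis i 1) = \<bar>\<tau>\<bar> * d 0 (axis i 1)"
proof (cases "\<tau> > 0")
  case True
  have "hdil \<tau> (axis i 1) = \<tau> *\<^sub>R axis i 1" "hdil \<tau> 0 = 0"
    using assms(2) by (auto simp: vec_eq_iff forall_3 hdil_c axis_def)
  moreover have "d (hdil \<tau> 0) (hdil \<tau> (axis i 1)) = \<tau> * d 0 (axis i 1)"
    using assms(1) True unfolding hom_dist_def by blast
  ultimately show ?thesis using True by simp
next
  case False
  show ?thesis
  proof (cases "\<tau> = 0")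
    case True then show ?thesis using assms(1) unfolding hom_dist_def by simp
  next
    case F2: False
    hence t: "-\<tau> > 0" using False by simp
    have "hdil (-\<tau>) (axis i 1) = (-\<tau>) *\<^sub>R axis i 1" "hdil (-\<tau>) 0 = 0"
      using assms(2) by (auto simp: vec_eq_iff forall_3 hdil_c axis_def)
    moreover have "d (hdil (-\<tau>) 0) (hdil (-\<tau>) (axis i 1)) = (-\<tau>) * d 0 (axis i 1)"
      using assms(1) t unfolding hom_dist_def by blast
    moreover have "hmul ((-\<tau>) *\<^sub>R axis i 1) (\<tau> *\<^sub>R axis i 1) = 0"
      using assms(2) by (auto simp: vec_eq_iff forall_3 hmul_c axis_def)
    moreover have "d (hmul ((-\<tau>) *\<^sub>R axis i 1) 0) (hmul ((-\<tau>) *\<^sub>R axis i 1) (\<tau> *\<^sub>R axis i 1)) = d 0 (\<tau> *\<^sub>R axis i 1)"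
      using assms(1) unfolding hom_dist_def by blast
    moreover have "d ((-\<tau>) *\<^sub>R axis i 1) 0 = d 0 ((-\<tau>) *\<^sub>R axis i 1)"
      using assms(1) unfolding hom_dist_def by blast
    ultimately show ?thesis using False F2 by simp
  qed
qed

lemma line_deriv:
  assumes "C1alpha_h d \<alpha> F" "i = 1 \<or> i = 2"
  shows "((\<lambda>\<tau>. F (hmul y (\<tau> *\<^sub>R axis i 1))) has_vector_derivative Xder F i (hmul y (\<tau>0 *\<^sub>R axis i 1))) (at \<tau>0)"
proof -
  define z where "z = hmul y (\<tau>0 *\<^sub>R axis i 1)"
  define g where "g = (\<lambda>\<sigma>. F (hmul z (\<sigma> *\<^sub>R axis i 1)))"
  have "g differentiable (at 0)" using assms unfolding C1alpha_h_def g_def by blast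
  hence gd: "(g has_vector_derivative Xder F i z) (at ((\<lambda>\<tau>. \<tau> - \<tau>0) \<tau>0))"
    unfolding Xder_def g_def by (simp add: vector_derivative_works[symmetric])
  have sd: "((\<lambda>\<tau>::real. \<tau> - \<tau>0) has_vector_derivative 1) (at \<tau>0)"
    by (auto intro!: derivative_eq_intros)
  have eq: "(g \<circ> (\<lambda>\<tau>. \<tau> - \<tau>0)) = (\<lambda>\<tau>. F (hmul y (\<tau> *\<^sub>R axis i 1)))"
  proof
    fix \<tau>
    have "hmul z ((\<tau> - \<tau>0) *\<^sub>R axis i 1) = hmul y (\<tau> *\<^sub>R axis i 1)"
      unfolding z_def using assms(2) by (auto simp: vec_eq_iff forall_3 hmul_c axis_def algebra_simps)
    thus "(g \<circ> (\<lambda>\<tau>. \<tau> - \<tau>0)) \<tau> = F (hmul y (\<tau> *\<^sub>R axis i 1))" by (simp add: g_def)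
  qed
  show ?thesis using vector_diff_chain_at[OF sd gd] unfolding eq z_def by simp
qed


lemma seg_abs: "\<tau> \<in> closed_segment 0 (h::real) \<Longrightarrow> \<bar>\<tau>\<bar> \<le> \<bar>h\<bar>"
  by (auto simp: closed_segment_real_eq abs_mult intro!: mult_left_le)

lemma step_lemma:
  assumes C1: "C1alpha_h d \<alpha> F" and i: "i = 1 \<or> i = 2"
    and E: "\<And>z. d p z \<le> \<delta> \<Longrightarrow> norm (Xder F i z - Xder F i p) \<le> E"
    and seg: "\<And>\<tau>. \<tau> \<in> closed_segment 0 h \<Longrightarrow> d p (hmul y (\<tau> *\<^sub>R axis i 1)) \<le> \<delta>"
  shows "norm (F (hmul y (h *\<^sub>R axis i 1)) - F y - h *\<^sub>R Xder F i p) \<le> \<bar>h\<bar> * (3*E)"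
proof -
  define f where "f = (\<lambda>\<tau>. F (hmul y (\<tau> *\<^sub>R axis i 1)))"
  define f' where "f' = (\<lambda>\<tau>. Xder F i (hmul y (\<tau> *\<^sub>R axis i 1)))"
  have d: "\<And>x. x \<in> closed_segment 0 h \<Longrightarrow> (f has_vector_derivative f' x) (at x within closed_segment 0 h)"
    unfolding f_def f'_def using line_deriv[OF C1 i] has_vector_derivative_at_within by blast
  have z: "(0::real) \<in> closed_segment 0 h" by simp
  have B: "norm (f' x - f' 0) \<le> 2*E" if "x \<in> closed_segment 0 h" for x
  proof -
    have "norm (f' x - Xder F i p) \<le> E" unfolding f'_def using E seg that by blast
    moreover have "norm (f' 0 - Xder F i p) \<le> E" unfolding f'_def using E seg z by blast
    moreover have "norm (f' x - f' 0) \<le> norm (f' x - Xder F i p) + norm (f' 0 - Xder F i p)"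
      using norm_triangle_ineq4[of "f' x - Xder F i p" "f' 0 - Xder F i p"] by simp
    ultimately show ?thesis by linarith
  qed
  have 1: "norm (f h - f 0 - (h - 0) *\<^sub>R f' 0) \<le> norm (h - 0) * (2*E)"
    by (rule vector_differentiable_bound_linearization[OF d _ B z]) auto
  have 2: "norm (h *\<^sub>R f' 0 - h *\<^sub>R Xder F i p) \<le> \<bar>h\<bar> * E"
  proof -
    have "norm (f' 0 - Xder F i p) \<le> E" unfolding f'_def using E seg z by blast
    hence "\<bar>h\<bar> * norm (f' 0 - Xder F i p) \<le> \<bar>h\<bar> * E" by (simp add: mult_left_mono)
    thus ?thesis by (metis norm_scaleR scaleR_diff_right)
  qed
  have "F (hmul y (h *\<^sub>R axis i 1)) - F y - h *\<^sub>R Xder F i p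
      = (f h - f 0 - (h - 0) *\<^sub>R f' 0) + (h *\<^sub>R f' 0 - h *\<^sub>R Xder F i p)"
    unfolding f_def by simp
  hence "norm (F (hmul y (h *\<^sub>R axis i 1)) - F y - h *\<^sub>R Xder F i p)
     \<le> norm (f h - f 0 - (h - 0) *\<^sub>R f' 0) + norm (h *\<^sub>R f' 0 - h *\<^sub>R Xder F i p)"
    by (metis norm_triangle_ineq)
  thus ?thesis using 1 2 by simp
qed

lemma path_lemma:
  assumes hd: "hom_dist d" and C1: "C1alpha_h d \<alpha> F"
    and E: "\<And>z i. i = 1 \<or> i = 2 \<Longrightarrow> d p z \<le> \<delta> \<Longrightarrow> norm (Xder F i z - Xder F i p) \<le> E"
    and st: "\<forall>x\<in>set xs. fst x = 1 \<or> fst x = 2"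
    and nm: "d 0 (axis 1 1) \<le> nm" "d 0 (axis 2 1) \<le> nm"
    and b: "d p y + (\<Sum>x\<leftarrow>xs. \<bar>snd x\<bar>) * nm \<le> \<delta>"
  shows "norm (F (psteps y xs) - F y - (\<Sum>x\<leftarrow>xs. snd x *\<^sub>R Xder F (fst x) p)) \<le> (\<Sum>x\<leftarrow>xs. \<bar>snd x\<bar>) * (3*E)"
  using st b
proof (induction xs arbitrary: y)
  case Nil
  then show ?case by simp
next
  case (Cons a xs)
  obtain i h where a: "a = (i,h)" by fastforce
  have i: "i = 1 \<or> i = 2" using Cons.prems a by auto
  have nmi: "d 0 (axis i 1) \<le> nm" using i nm by auto
  have sx: "(\<Sum>x\<leftarrow>xs. \<bar>snd x\<bar>) \<ge> 0" by (induction xs) auto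
  have nm0: "nm \<ge> 0" using nm(1) d_nonneg[OF hd] by (meson order_trans)
  have dstep: "d p (hmul y (\<tau> *\<^sub>R axis i 1)) \<le> d p y + \<bar>\<tau>\<bar> * nm" for \<tau>
  proof -
    have "d p (hmul y (\<tau> *\<^sub>R axis i 1)) \<le> d p y + \<bar>\<tau>\<bar> * d 0 (axis i 1)"
      using d_stepR[OF hd, of p y "\<tau> *\<^sub>R axis i 1"] N_axis[OF hd i, of \<tau>] by simp
    moreover have "\<bar>\<tau>\<bar> * d 0 (axis i 1) \<le> \<bar>\<tau>\<bar> * nm" using nmi by (simp add: mult_left_mono)
    ultimately show ?thesis by linarith
  qed
  have seg: "d p (hmul y (\<tau> *\<^sub>R axis i 1)) \<le> \<delta>" if "\<tau> \<in> closed_segment 0 h" for \<tau>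
  proof -
    have "\<bar>\<tau>\<bar> * nm \<le> \<bar>h\<bar> * nm" using seg_abs[OF that] nm0 by (simp add: mult_right_mono)
    moreover have "\<bar>h\<bar> * nm \<le> (\<Sum>x\<leftarrow>a#xs. \<bar>snd x\<bar>) * nm" using a sx nm0
      by (simp add: distrib_right)
    ultimately show ?thesis using dstep[of \<tau>] Cons.prems(2) by linarith
  qed
  define y' where "y' = hmul y (h *\<^sub>R axis i 1)"
  have b': "d p y' + (\<Sum>x\<leftarrow>xs. \<bar>snd x\<bar>) * nm \<le> \<delta>"
    using dstep[of h] Cons.prems(2) a unfolding y'_def by (simp add: distrib_right)
  have IH: "norm (F (psteps y' xs) - F y' - (\<Sum>x\<leftarrow>xs. snd x *\<^sub>R Xder F (fst x) p)) \<le> (\<Sum>x\<leftarrow>xs. \<bar>snd x\<bar>) * (3*E)"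
    using Cons.IH[OF _ b'] Cons.prems(1) by simp
  have S: "norm (F y' - F y - h *\<^sub>R Xder F i p) \<le> \<bar>h\<bar> * (3*E)"
    unfolding y'_def by (rule step_lemma[OF C1 i _ seg]) (use E i in auto)
  have "norm ((F (psteps y' xs) - F y' - (\<Sum>x\<leftarrow>xs. snd x *\<^sub>R Xder F (fst x) p)) + (F y' - F y - h *\<^sub>R Xder F i p))
     \<le> (\<Sum>x\<leftarrow>xs. \<bar>snd x\<bar>) * (3*E) + \<bar>h\<bar> * (3*E)"
    by (rule order_trans[OF norm_triangle_ineq add_mono[OF IH S]])
  then show ?case using a unfolding y'_def by (simp add: algebra_simps)
qed


lemma col_le: "norm (column k (A::real^2^2)) \<le> norm A"
  by (rule norm_le_componentwise_cart) (simp add: column_def component_le_norm_cart)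

lemma Xder_col: "Xder F 1 z - Xder F 1 p = column 1 (hgrad F z - hgrad F p)"
   "Xder F 2 z - Xder F 2 p = column 2 (hgrad F z - hgrad F p)"
  by (auto simp: vec_eq_iff column_def hgrad_def)

lemma E_bound:
  assumes hd: "hom_dist d" and C1: "C1alpha_h d \<alpha> F"
  obtains C where "C \<ge> 0" "\<And>z i. i = 1 \<or> i = 2 \<Longrightarrow> d p z \<le> D \<Longrightarrow> norm (Xder F i z - Xder F i p) \<le> C * d p z powr \<alpha>"
proof -
  define S where "S = {z. d p z \<le> D}"
  have "d_bounded d S" unfolding d_bounded_def
  proof (intro exI ballI)
    fix x y assume "x \<in> S" "y \<in> S"
    hence "d p x \<le> D" "d p y \<le> D" by (auto simp: S_def)
    moreover have "d x y \<le> d x p + d p y" "d x p = d p x" using hd unfolding hom_dist_def by blast+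
    ultimately show "d x y \<le> 2*D" by linarith
  qed
  then obtain C0 where C0: "\<forall>x\<in>S. \<forall>y\<in>S. norm (hgrad F x - hgrad F y) \<le> C0 * d x y powr \<alpha>"
    using C1 unfolding C1alpha_h_def by blast
  show ?thesis
  proof (rule that[of "max C0 0"])
    fix z and i :: 3 assume i: "i = 1 \<or> i = 2" and z: "d p z \<le> D"
    have "d p p = 0" using hd unfolding hom_dist_def by blast
    hence pS: "p \<in> S" using z d_nonneg[OF hd, of p z] unfolding S_def by auto
    have "norm (Xder F i z - Xder F i p) \<le> norm (hgrad F z - hgrad F p)"
      using i Xder_col(1)[of F z p] Xder_col(2)[of F z p] col_le[of 1 "hgrad F z - hgrad F p"] col_le[of 2 "hgrad F z - hgrad F p"] by auto
    also have "\<dots> \<le> C0 * d z p powr \<alpha>" using C0 pS z unfolding S_def by auto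
    also have "\<dots> \<le> max C0 0 * d p z powr \<alpha>"
      using hd unfolding hom_dist_def by (simp add: mult_right_mono)
    finally show "norm (Xder F i z - Xder F i p) \<le> max C0 0 * d p z powr \<alpha>" .
  qed simp
qed

lemma mat_lin: "hgrad F p *v x = x$1 *\<^sub>R Xder F 1 p + x$2 *\<^sub>R Xder F 2 p"
  by (simp add: vec_eq_iff matrix_vector_mult_def sum_2 hgrad_def forall_2 mult.commute)

lemma lin_bound:
  assumes "\<forall>x\<in>set xs. fst x = 1 \<or> fst x = 2"
  shows "norm (\<Sum>x\<leftarrow>xs. snd x *\<^sub>R Xder F (fst x) p) \<le> (\<Sum>x\<leftarrow>xs. \<bar>snd x\<bar>) * (norm (Xder F 1 p) + norm (Xder F 2 p))"
  using assms
proof (induction xs)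
  case Nil then show ?case by simp
next
  case (Cons a xs)
  have "norm (snd a *\<^sub>R Xder F (fst a) p) \<le> \<bar>snd a\<bar> * (norm (Xder F 1 p) + norm (Xder F 2 p))"
    using Cons.prems by (auto intro!: mult_left_mono)
  moreover have "norm (\<Sum>x\<leftarrow>xs. snd x *\<^sub>R Xder F (fst x) p) \<le> (\<Sum>x\<leftarrow>xs. \<bar>snd x\<bar>) * (norm (Xder F 1 p) + norm (Xder F 2 p))"
    using Cons by simp
  moreover have "norm (\<Sum>x\<leftarrow>a#xs. snd x *\<^sub>R Xder F (fst x) p) \<le> norm (snd a *\<^sub>R Xder F (fst a) p) + norm (\<Sum>x\<leftarrow>xs. snd x *\<^sub>R Xder F (fst x) p)"
    using norm_triangle_ineq[of "snd a *\<^sub>R Xder F (fst a) p" "\<Sum>x\<leftarrow>xs. snd x *\<^sub>R Xder F (fst x) p"] by simp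
  ultimately show ?case by (simp add: distrib_right)
qed


definition six :: "real \<Rightarrow> real^3 \<Rightarrow> (3 \<times> real) list" where
  "six r q = [(1, r * q$1), (2, r * q$2), (1, r), (2, r * ((q$3 - q$1 * q$2)/2)), (1, -r), (2, -r * ((q$3 - q$1 * q$2)/2))]"

lemma six_eq: "hmul p (hdil r (hmul q (hmul (s *\<^sub>R axis 1 1) (t *\<^sub>R axis 2 1)))) =
  psteps (psteps p (six r q)) [(1, r * s), (2, r * t)]"
  unfolding six_def using test by simp

lemma main_est:
  assumes hd: "hom_dist d" and C1: "C1alpha_h d \<alpha> F" and r: "0 < r" "r \<le> 1" and al: "0 \<le> \<alpha>"
    and W0: "\<bar>q$1\<bar> + \<bar>q$2\<bar> + 2 + \<bar>q$3 - q$1 * q$2\<bar> + \<bar>v$1\<bar> + \<bar>v$2\<bar> \<le> W0"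
    and nm: "d 0 (axis 1 1) \<le> nm" "d 0 (axis 2 1) \<le> nm"
    and C: "C \<ge> 0" "\<And>z i. i = 1 \<or> i = 2 \<Longrightarrow> d p z \<le> W0 * nm \<Longrightarrow> norm (Xder F i z - Xder F i p) \<le> C * d p z powr \<alpha>"
  shows "norm (Fpr F p r (hmul q (hmul (v$1 *\<^sub>R axis 1 1) (v$2 *\<^sub>R axis 2 1))) - hgrad F p *v (horiz q + v))
     \<le> W0 * (3 * (C * (r * W0 * nm) powr \<alpha>))"
proof -
  define xs where "xs = six r q @ [(1, r * v$1), (2, r * v$2)]"
  define E where "E = C * (r * W0 * nm) powr \<alpha>"
  have nm0: "nm \<ge> 0" using nm(1) d_nonneg[OF hd] by (meson order_trans)
  have W00: "W0 \<ge> 0" using W0 by linarith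
  have E0: "E \<ge> 0" unfolding E_def using C(1) by simp
  have st: "\<forall>x\<in>set xs. fst x = 1 \<or> fst x = 2" by (simp add: xs_def six_def)
  have sum_eq: "(\<Sum>x\<leftarrow>xs. \<bar>snd x\<bar>) = r * (\<bar>q$1\<bar> + \<bar>q$2\<bar> + 2 + \<bar>q$3 - q$1 * q$2\<bar> + \<bar>v$1\<bar> + \<bar>v$2\<bar>)"
  proof -
    have a1: "\<bar>r * q $ 3 - r * (q $ 1 * q $ 2)\<bar> = r * \<bar>q$3 - q$1 * q$2\<bar>"
      using r by (simp add: abs_mult right_diff_distrib[symmetric])
    have a2: "\<bar>r * (q $ 1 * q $ 2) - r * q $ 3\<bar> = r * \<bar>q$3 - q$1 * q$2\<bar>"
      using r by (simp add: abs_mult right_diff_distrib[symmetric] abs_minus_commute)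
    show ?thesis using r by (simp add: xs_def six_def abs_mult algebra_simps a1 a2)
  qed
  have sumle: "(\<Sum>x\<leftarrow>xs. \<bar>snd x\<bar>) \<le> r * W0" unfolding sum_eq using W0 r by simp
  have sum0: "(\<Sum>x\<leftarrow>xs. \<bar>snd x\<bar>) \<ge> 0" unfolding sum_eq using r by simp
  have dle: "r * W0 * nm \<le> W0 * nm" using r W00 nm0 mult_left_le_one_le[of "W0 * nm" r] by (simp add: mult.assoc)
  have Ec: "norm (Xder F i z - Xder F i p) \<le> E" if "i = 1 \<or> i = 2" "d p z \<le> r * W0 * nm" for z i
  proof -
    have "norm (Xder F i z - Xder F i p) \<le> C * d p z powr \<alpha>" using C(2) that dle by force
    also have "\<dots> \<le> E" unfolding E_def using C(1) that(2) d_nonneg[OF hd, of p z] al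
      by (intro mult_left_mono powr_mono2) auto
    finally show ?thesis .
  qed
  have dpp: "d p p = 0" using hd unfolding hom_dist_def by blast
  have b: "d p p + (\<Sum>x\<leftarrow>xs. \<bar>snd x\<bar>) * nm \<le> r * W0 * nm"
    using sumle nm0 dpp by (simp add: mult_right_mono)
  have P: "norm (F (psteps p xs) - F p - (\<Sum>x\<leftarrow>xs. snd x *\<^sub>R Xder F (fst x) p)) \<le> (\<Sum>x\<leftarrow>xs. \<bar>snd x\<bar>) * (3*E)"
    by (rule path_lemma[OF hd C1 Ec st nm b]) auto
  have P2: "(\<Sum>x\<leftarrow>xs. \<bar>snd x\<bar>) * (3*E) \<le> r * (W0 * (3 * E))"
    using sumle E0 by (metis mult.assoc mult_right_mono mult_nonneg_nonneg zero_le_numeral)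
  have lin: "(\<Sum>x\<leftarrow>xs. snd x *\<^sub>R Xder F (fst x) p) = r *\<^sub>R (hgrad F p *v (horiz q + v))"
    apply (simp add: xs_def six_def mat_lin horiz_c algebra_simps)
    apply (simp only: scaleR_add_left[symmetric])
    apply (simp add: field_simps)
    done
  have pe: "psteps p xs = hmul p (hdil r (hmul q (hmul (v$1 *\<^sub>R axis 1 1) (v$2 *\<^sub>R axis 2 1))))"
    unfolding six_eq xs_def psteps_append ..
  have "Fpr F p r (hmul q (hmul (v$1 *\<^sub>R axis 1 1) (v$2 *\<^sub>R axis 2 1))) - hgrad F p *v (horiz q + v)
      = (1/r) *\<^sub>R (F (psteps p xs) - F p - (\<Sum>x\<leftarrow>xs. snd x *\<^sub>R Xder F (fst x) p))"
    unfolding lin pe Fpr_def using r by (simp add: algebra_simps)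
  hence "norm (Fpr F p r (hmul q (hmul (v$1 *\<^sub>R axis 1 1) (v$2 *\<^sub>R axis 2 1))) - hgrad F p *v (horiz q + v))
      = (1/r) * norm (F (psteps p xs) - F p - (\<Sum>x\<leftarrow>xs. snd x *\<^sub>R Xder F (fst x) p))"
    using r by simp
  also have "\<dots> \<le> (1/r) * (r * (W0 * (3 * E)))"
    using P P2 r by (intro mult_left_mono) auto
  also have "\<dots> = W0 * (3 * E)" using r by simp
  finally show ?thesis unfolding E_def .
qed


lemma G_cont:
  assumes hd: "hom_dist d" and C1: "C1alpha_h d \<alpha> F" and al: "0 \<le> \<alpha>"
  shows "continuous_on UNIV (\<lambda>w::real^2. F (psteps x [(1, w$1), (2, w$2)]))"
proof -
  define G where "G = (\<lambda>w::real^2. F (psteps x [(1, w$1), (2, w$2)]))"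
  have "isCont G w0" for w0
  proof -
    define y0 where "y0 = psteps x [(1,w0$1),(2,w0$2)]"
    define nm where "nm = d 0 (axis 1 1) + d 0 (axis 2 1)"
    have nm: "d 0 (axis 1 1) \<le> nm" "d 0 (axis 2 1) \<le> nm" unfolding nm_def
      using d_nonneg[OF hd] by (auto simp: add_increasing add_increasing2)
    have nm0: "nm \<ge> 0" using nm(1) d_nonneg[OF hd] by (meson order_trans)
    define Lm where "Lm = 6 + 2 * \<bar>w0$2\<bar>"
    define D where "D = Lm * nm"
    obtain C where C: "C \<ge> 0" "\<And>z i. i = 1 \<or> i = 2 \<Longrightarrow> d y0 z \<le> D \<Longrightarrow> norm (Xder F i z - Xder F i y0) \<le> C * d y0 z powr \<alpha>"
      using E_bound[OF hd C1] by blast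
    define E where "E = C * D powr \<alpha>"
    define K where "K = 3 * E + (norm (Xder F 1 y0) + norm (Xder F 2 y0))"
    define len where "len = (\<lambda>w::real^2. \<bar>w$2 - w0$2\<bar> + \<bar>w$1 - w0$1\<bar> + 2 * sqrt \<bar>w$1 - w0$1\<bar> + 2 * (sqrt \<bar>w$1 - w0$1\<bar> * \<bar>w$2\<bar>))"
    have Ec: "norm (Xder F i z - Xder F i y0) \<le> E" if "i = 1 \<or> i = 2" "d y0 z \<le> D" for z i
    proof -
      have "norm (Xder F i z - Xder F i y0) \<le> C * d y0 z powr \<alpha>" using C(2) that by force
      also have "\<dots> \<le> E" unfolding E_def using C(1) that(2) d_nonneg[OF hd, of y0 z] al
        by (intro mult_left_mono powr_mono2) auto
      finally show ?thesis .
    qed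
    have E0: "E \<ge> 0" unfolding E_def using C(1) by simp
    have main: "norm (G w - G w0) \<le> len w * K" if dw: "dist w w0 < 1" for w
    proof -
      define \<Delta> where "\<Delta> = w$1 - w0$1"
      define u where "u = sgn \<Delta> * sqrt \<bar>\<Delta>\<bar>"
      define v where "v = sqrt \<bar>\<Delta>\<bar> * w$2"
      have uv: "u * v = (w$1 - w0$1) * w$2"
      proof -
        have "u * v = (sgn \<Delta> * (sqrt \<bar>\<Delta>\<bar> * sqrt \<bar>\<Delta>\<bar>)) * w$2" unfolding u_def v_def by (simp add: algebra_simps)
        also have "\<dots> = \<Delta> * w$2" by (simp add: sgn_mult_abs)
        finally show ?thesis unfolding \<Delta>_def .
      qed
      define L where "L = [(2::3, w$2-w0$2), (1, w$1-w0$1), (1,u), (2,v), (1,-u), (2,-v)]"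
      have pe: "psteps y0 L = psteps x [(1,w$1),(2,w$2)]"
        unfolding y0_def L_def by (rule path_cont_eq[OF uv])
      have st: "\<forall>x\<in>set L. fst x = 1 \<or> fst x = 2" by (simp add: L_def)
      have au: "\<bar>u\<bar> \<le> sqrt \<bar>\<Delta>\<bar>" unfolding u_def by (cases "\<Delta> = 0") (auto simp: abs_mult abs_sgn_eq)
      have sumL: "(\<Sum>x\<leftarrow>L. \<bar>snd x\<bar>) = \<bar>w$2 - w0$2\<bar> + \<bar>\<Delta>\<bar> + 2 * \<bar>u\<bar> + 2 * \<bar>v\<bar>"
        by (simp add: L_def \<Delta>_def)
      have av: "\<bar>v\<bar> = sqrt \<bar>\<Delta>\<bar> * \<bar>w$2\<bar>" unfolding v_def by (simp add: abs_mult)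
      have s1: "(\<Sum>x\<leftarrow>L. \<bar>snd x\<bar>) \<le> len w" unfolding sumL len_def \<Delta>_def[symmetric] av using au by linarith
      have c1: "\<bar>w$1 - w0$1\<bar> \<le> 1" "\<bar>w$2 - w0$2\<bar> \<le> 1"
        using dw component_le_norm_cart[of "w - w0" 1] component_le_norm_cart[of "w - w0" 2] by (auto simp: dist_norm)
      hence c2: "sqrt \<bar>\<Delta>\<bar> \<le> 1" "\<bar>w$2\<bar> \<le> \<bar>w0$2\<bar> + 1" unfolding \<Delta>_def by auto
      have "sqrt \<bar>\<Delta>\<bar> * \<bar>w$2\<bar> \<le> 1 * (\<bar>w0$2\<bar> + 1)" using c2 by (intro mult_mono) auto
      hence c3: "sqrt \<bar>\<Delta>\<bar> * \<bar>w$2\<bar> \<le> \<bar>w0$2\<bar> + 1" by simp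
      have c4: "\<bar>u\<bar> \<le> 1" using au c2 by linarith
      have s2: "(\<Sum>x\<leftarrow>L. \<bar>snd x\<bar>) \<le> Lm" unfolding sumL Lm_def av using c1(2) c3 c4 \<Delta>_def c1(1) by linarith
      have dyy: "d y0 y0 = 0" using hd unfolding hom_dist_def by blast
      have b: "d y0 y0 + (\<Sum>x\<leftarrow>L. \<bar>snd x\<bar>) * nm \<le> D" unfolding D_def dyy using s2 nm0 by (simp add: mult_right_mono)
      have P: "norm (F (psteps y0 L) - F y0 - (\<Sum>x\<leftarrow>L. snd x *\<^sub>R Xder F (fst x) y0)) \<le> (\<Sum>x\<leftarrow>L. \<bar>snd x\<bar>) * (3*E)"
        by (rule path_lemma[OF hd C1 Ec st nm b]) auto
      have Lb: "norm (\<Sum>x\<leftarrow>L. snd x *\<^sub>R Xder F (fst x) y0) \<le> (\<Sum>x\<leftarrow>L. \<bar>snd x\<bar>) * (norm (Xder F 1 y0) + norm (Xder F 2 y0))"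
        by (rule lin_bound[OF st])
      have "norm (F (psteps y0 L) - F y0) \<le> norm (F (psteps y0 L) - F y0 - (\<Sum>x\<leftarrow>L. snd x *\<^sub>R Xder F (fst x) y0)) + norm (\<Sum>x\<leftarrow>L. snd x *\<^sub>R Xder F (fst x) y0)"
        using norm_triangle_ineq[of "F (psteps y0 L) - F y0 - (\<Sum>x\<leftarrow>L. snd x *\<^sub>R Xder F (fst x) y0)" "\<Sum>x\<leftarrow>L. snd x *\<^sub>R Xder F (fst x) y0"] by simp
      also have "\<dots> \<le> (\<Sum>x\<leftarrow>L. \<bar>snd x\<bar>) * K" using P Lb unfolding K_def by (simp add: distrib_left)
      also have "\<dots> \<le> len w * K" using s1 E0 unfolding K_def by (intro mult_right_mono) auto
      finally show ?thesis unfolding G_def pe[symmetric] y0_def .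
    qed
    have ev: "eventually (\<lambda>w. norm (G w - G w0) \<le> len w * K) (at w0)"
      unfolding eventually_at using main by (intro exI[of _ 1]) auto
    have "isCont (\<lambda>w. len w * K) w0" unfolding len_def by (intro continuous_intros)
    hence "((\<lambda>w. len w * K) \<longlongrightarrow> 0) (at w0)" unfolding isCont_def by (simp add: len_def)
    hence "((\<lambda>w. G w - G w0) \<longlongrightarrow> 0) (at w0)" by (rule Lim_null_comparison[OF ev])
    thus ?thesis unfolding isCont_def by (rule LIM_zero_cancel)
  qed
  thus ?thesis unfolding G_def[symmetric] by (simp add: continuous_on_eq_continuous_at)
qed


lemma local_surj:
  assumes hd: "hom_dist d" and C1: "C1alpha_h d \<alpha> F" and al: "0 < \<alpha>"
    and inv: "invertible (hgrad F p)" and q0: "d 0 q0 < \<epsilon>"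
  shows "\<exists>e>0. eventually (\<lambda>r. \<forall>k\<in>ball (hgrad F p *v horiz q0) e. k \<in> Fpr F p r ` dball d 0 \<epsilon>) (at_right 0)"
proof -
  define M where "M = hgrad F p"
  obtain Mi where Mi: "M ** Mi = mat 1" "Mi ** M = mat 1" using inv unfolding invertible_def M_def by blast
  obtain \<beta> where \<beta>: "\<beta> > 0" "\<And>y. norm (Mi *v y) \<le> norm y * \<beta>"
    using bounded_linear.pos_bounded[OF matrix_vector_mul_bounded_linear[of Mi]] by blast
  define nm where "nm = d 0 (axis 1 1) + d 0 (axis 2 1)"
  have nm: "d 0 (axis 1 1) \<le> nm" "d 0 (axis 2 1) \<le> nm" unfolding nm_def
    using d_nonneg[OF hd] by (auto simp: add_increasing add_increasing2)
  have nm0: "nm \<ge> 0" using nm(1) d_nonneg[OF hd] by (meson order_trans)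
  define \<rho> where "\<rho> = (\<epsilon> - d 0 q0) / (2 * (nm + 1))"
  have \<rho>0: "\<rho> > 0" unfolding \<rho>_def using q0 nm0 by simp
  have \<rho>nm: "2 * \<rho> * nm < \<epsilon> - d 0 q0"
  proof -
    have "2 * \<rho> * nm = (\<epsilon> - d 0 q0) * (nm / (nm + 1))" unfolding \<rho>_def using nm0 by (simp add: field_simps)
    also have "\<dots> < (\<epsilon> - d 0 q0) * 1" using q0 nm0 by (intro mult_strict_left_mono) auto
    finally show ?thesis by simp
  qed
  define W0 where "W0 = \<bar>q0$1\<bar> + \<bar>q0$2\<bar> + 2 + \<bar>q0$3 - q0$1 * q0$2\<bar> + 2 * \<rho>"
  obtain C where C: "C \<ge> 0" "\<And>z i. i = 1 \<or> i = 2 \<Longrightarrow> d p z \<le> W0 * nm \<Longrightarrow> norm (Xder F i z - Xder F i p) \<le> C * d p z powr \<alpha>"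
    using E_bound[OF hd C1] by blast
  define \<eta> where "\<eta> = \<rho> / (2 * \<beta>)"
  have \<eta>0: "\<eta> > 0" unfolding \<eta>_def using \<rho>0 \<beta> by simp
  have lim: "((\<lambda>r. W0 * (3 * (C * (r * W0 * nm) powr \<alpha>))) \<longlongrightarrow> 0) (at_right 0)"
  proof -
    have "((\<lambda>r::real. r * W0 * nm) \<longlongrightarrow> 0 * W0 * nm) (at_right 0)" by (intro tendsto_intros)
    hence a: "((\<lambda>r::real. r * W0 * nm) \<longlongrightarrow> 0) (at_right 0)" by simp
    have b: "\<forall>\<^sub>F r in at_right 0. 0 \<le> r * W0 * nm"
    proof -
      have "W0 \<ge> 0" unfolding W0_def using \<rho>0 by simp
      thus ?thesis using nm0 by (auto simp: eventually_at_right_field intro!: exI[of _ 1])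
    qed
    have "((\<lambda>r. (r * W0 * nm) powr \<alpha>) \<longlongrightarrow> 0) (at_right 0)"
      by (rule tendsto_zero_powrI[OF a tendsto_const b al])
    hence "((\<lambda>r. W0 * (3 * (C * (r * W0 * nm) powr \<alpha>))) \<longlongrightarrow> W0 * (3 * (C * 0))) (at_right 0)"
      by (intro tendsto_intros)
    thus ?thesis by simp
  qed
  have ev1: "\<forall>\<^sub>F r in at_right 0. W0 * (3 * (C * (r * W0 * nm) powr \<alpha>)) < \<eta>"
    using order_tendstoD(2)[OF lim \<eta>0] .
  have ev2: "\<forall>\<^sub>F r in at_right (0::real). 0 < r \<and> r \<le> 1"
    by (auto simp: eventually_at_right_field intro!: exI[of _ 1])
  have good: "\<forall>k\<in>ball (M *v horiz q0) \<eta>. k \<in> Fpr F p r ` dball d 0 \<epsilon>"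
    if r: "0 < r" "r \<le> 1" and rb: "W0 * (3 * (C * (r * W0 * nm) powr \<alpha>)) < \<eta>" for r
  proof
    fix k assume k: "k \<in> ball (M *v horiz q0) \<eta>"
    define qv where "qv = (\<lambda>v::real^2. hmul q0 (hmul (v$1 *\<^sub>R axis 1 1) (v$2 *\<^sub>R axis 2 1)))"
    define \<Phi> where "\<Phi> = (\<lambda>v. Fpr F p r (qv v))"
    define g where "g = (\<lambda>v. v + Mi *v (k - \<Phi> v))"
    define x0 where "x0 = psteps p (six r q0)"
    have \<Phi>eq: "\<Phi> = (\<lambda>v. (1/r) *\<^sub>R (F (psteps x0 [(1, (r *\<^sub>R v)$1), (2, (r *\<^sub>R v)$2)]) - F p))"
      using r by (auto simp: \<Phi>_def qv_def Fpr_def six_eq x0_def)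
    have Gc: "continuous_on UNIV (\<lambda>w::real^2. F (psteps x0 [(1, w$1), (2, w$2)]))"
      using G_cont[OF hd C1] al by simp
    have "continuous_on (cball 0 \<rho>) \<Phi>" unfolding \<Phi>eq
      by (intro continuous_intros continuous_on_compose2[OF Gc]) auto
    hence "continuous_on (cball 0 \<rho>) (\<lambda>x. k - \<Phi> x)" by (intro continuous_intros)
    hence "continuous_on (cball 0 \<rho>) (\<lambda>x. Mi *v (k - \<Phi> x))"
      by (rule continuous_on_compose2[OF matrix_vector_mult_linear_continuous_on[of UNIV Mi]]) auto
    hence gc: "continuous_on (cball 0 \<rho>) g" unfolding g_def by (intro continuous_intros)
    have est: "norm (\<Phi> v - M *v (horiz q0 + v)) \<le> W0 * (3 * (C * (r * W0 * nm) powr \<alpha>))"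
      if "v \<in> cball 0 \<rho>" for v
    proof -
      have "\<bar>v$1\<bar> \<le> \<rho>" "\<bar>v$2\<bar> \<le> \<rho>" using that component_le_norm_cart[of v 1] component_le_norm_cart[of v 2] by auto
      hence W: "\<bar>q0$1\<bar> + \<bar>q0$2\<bar> + 2 + \<bar>q0$3 - q0$1 * q0$2\<bar> + \<bar>v$1\<bar> + \<bar>v$2\<bar> \<le> W0" unfolding W0_def by linarith
      show ?thesis unfolding \<Phi>_def qv_def M_def
        by (rule main_est[OF hd C1 r less_imp_le[OF al] W nm C])
    qed
    have MMi: "M *v (Mi *v y) = y" for y by (simp add: matrix_vector_mul_assoc Mi)
    have MiM: "Mi *v (M *v y) = y" for y by (simp add: matrix_vector_mul_assoc Mi)
    have gS: "g \<in> cball 0 \<rho> \<rightarrow> cball 0 \<rho>"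
    proof
      fix v :: "real^2" assume v: "v \<in> cball 0 \<rho>"
      have "g v = Mi *v ((k - M *v horiz q0) - (\<Phi> v - M *v (horiz q0 + v)))"
        unfolding g_def by (simp add: matrix_vector_mult_diff_distrib matrix_vector_right_distrib MiM algebra_simps)
      hence "norm (g v) \<le> norm ((k - M *v horiz q0) - (\<Phi> v - M *v (horiz q0 + v))) * \<beta>" using \<beta>(2) by simp
      also have "\<dots> \<le> (norm (k - M *v horiz q0) + norm (\<Phi> v - M *v (horiz q0 + v))) * \<beta>"
        using \<beta>(1) by (intro mult_right_mono norm_triangle_ineq4) auto
      also have "\<dots> \<le> (\<eta> + \<eta>) * \<beta>"
        using \<beta>(1) est[OF v] rb k by (intro mult_right_mono) (auto simp: dist_norm norm_minus_commute)
      also have "\<dots> = \<rho>" unfolding \<eta>_def using \<beta>(1) by simp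
      finally show "g v \<in> cball 0 \<rho>" by simp
    qed
    obtain v where v: "v \<in> cball 0 \<rho>" "g v = v"
      using brouwer[OF compact_cball convex_cball _ gc gS] \<rho>0 by auto
    have "Mi *v (k - \<Phi> v) = 0" using v(2) unfolding g_def by simp
    hence "M *v (Mi *v (k - \<Phi> v)) = 0" by simp
    hence kk: "k = \<Phi> v" unfolding MMi by simp
    have "qv v \<in> dball d 0 \<epsilon>"
    proof -
      have "\<bar>v$1\<bar> \<le> \<rho>" "\<bar>v$2\<bar> \<le> \<rho>" using v(1) component_le_norm_cart[of v 1] component_le_norm_cart[of v 2] by auto
      hence a: "\<bar>v$1\<bar> * d 0 (axis 1 1) \<le> \<rho> * nm" "\<bar>v$2\<bar> * d 0 (axis 2 1) \<le> \<rho> * nm"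
        using nm d_nonneg[OF hd] by (auto intro!: mult_mono)
      have "d 0 (qv v) \<le> d 0 q0 + d 0 (hmul (v$1 *\<^sub>R axis 1 1) (v$2 *\<^sub>R axis 2 1))"
        unfolding qv_def by (rule d_stepR[OF hd])
      also have "\<dots> \<le> d 0 q0 + (d 0 (v$1 *\<^sub>R axis 1 1) + d 0 (v$2 *\<^sub>R axis 2 1))"
        using d_stepR[OF hd, of 0 "v$1 *\<^sub>R axis 1 1" "v$2 *\<^sub>R axis 2 1"] by simp
      also have "\<dots> = d 0 q0 + (\<bar>v$1\<bar> * d 0 (axis 1 1) + \<bar>v$2\<bar> * d 0 (axis 2 1))"
        using N_axis[OF hd] by simp
      also have "\<dots> < \<epsilon>" using a \<rho>nm by linarith
      finally show ?thesis unfolding dball_def by simp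
    qed
    thus "k \<in> Fpr F p r ` dball d 0 \<epsilon>" using kk unfolding \<Phi>_def by blast
  qed
  have "\<forall>\<^sub>F r in at_right 0. \<forall>k\<in>ball (M *v horiz q0) \<eta>. k \<in> Fpr F p r ` dball d 0 \<epsilon>"
    using eventually_conj[OF ev1 ev2] by eventually_elim (use good in auto)
  thus ?thesis using \<eta>0 unfolding M_def by blast
qed


theorem mainTheorem13:
  fixes d :: "real^3 \<Rightarrow> real^3 \<Rightarrow> real" and F :: "real^3 \<Rightarrow> real^2"
    and \<alpha> \<epsilon> :: real and p :: "real^3" and K :: "(real^2) set"
  assumes "hom_dist d"
    and "0 < \<alpha>" and "\<alpha> \<le> 1"
    and "C1alpha_h d \<alpha> F"
    and "invertible (hgrad F p)"
    and "\<epsilon> > 0"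
    and "compact K"
    and "K \<subseteq> (\<lambda>q. hgrad F p *v horiz q) ` dball d 0 \<epsilon>"
  shows "\<exists>rb>0. \<forall>r\<in>{0..rb}. K \<subseteq> Fpr F p r ` dball d 0 \<epsilon>"
proof -
  have "\<forall>k0\<in>K. \<exists>e>0. eventually (\<lambda>r. \<forall>k\<in>ball k0 e. k \<in> Fpr F p r ` dball d 0 \<epsilon>) (at_right 0)"
  proof
    fix k0 assume "k0 \<in> K"
    then obtain q0 where q0: "q0 \<in> dball d 0 \<epsilon>" "k0 = hgrad F p *v horiz q0" using assms(8) by blast
    show "\<exists>e>0. eventually (\<lambda>r. \<forall>k\<in>ball k0 e. k \<in> Fpr F p r ` dball d 0 \<epsilon>) (at_right 0)"
      unfolding q0(2) by (rule local_surj[OF assms(1,4,2,5)]) (use q0(1) in \<open>simp add: dball_def\<close>)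
  qed
  then obtain e where e: "\<forall>k0\<in>K. e k0 > 0 \<and> eventually (\<lambda>r. \<forall>k\<in>ball k0 (e k0). k \<in> Fpr F p r ` dball d 0 \<epsilon>) (at_right 0)"
    using bchoice[of K "\<lambda>k0 e. e > 0 \<and> eventually (\<lambda>r. \<forall>k\<in>ball k0 e. k \<in> Fpr F p r ` dball d 0 \<epsilon>) (at_right 0)"] by blast
  have "K \<subseteq> (\<Union>k0\<in>K. ball k0 (e k0))" using e by force
  then obtain T where T: "T \<subseteq> K" "finite T" "K \<subseteq> (\<Union>k0\<in>T. ball k0 (e k0))"
    using compactE_image[OF assms(7), of K "\<lambda>k0. ball k0 (e k0)"] by auto
  have "eventually (\<lambda>r. \<forall>k0\<in>T. \<forall>k\<in>ball k0 (e k0). k \<in> Fpr F p r ` dball d 0 \<epsilon>) (at_right 0)"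
    by (rule eventually_ball_finite[OF T(2)]) (use e T(1) in blast)
  then obtain b where b: "b > 0" "\<And>r. r > 0 \<Longrightarrow> r < b \<Longrightarrow> \<forall>k0\<in>T. \<forall>k\<in>ball k0 (e k0). k \<in> Fpr F p r ` dball d 0 \<epsilon>"
    unfolding eventually_at_right_field by auto
  show ?thesis
  proof (intro exI[of _ "b/2"] conjI ballI)
    show "b/2 > 0" using b by simp
    fix r assume r: "r \<in> {0..b/2}"
    show "K \<subseteq> Fpr F p r ` dball d 0 \<epsilon>"
    proof (cases "r = 0")
      case True
      have "Fpr F p r = (\<lambda>q. hgrad F p *v horiz q)" using True by (simp add: Fpr_def fun_eq_iff)
      thus ?thesis using assms(8) by simp
    next
      case False
      have "r > 0" "r < b" using r b False by auto
      show ?thesis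
      proof
        fix k assume "k \<in> K"
        then obtain k0 where "k0 \<in> T" "k \<in> ball k0 (e k0)" using T(3) by blast
        thus "k \<in> Fpr F p r ` dball d 0 \<epsilon>" using b(2)[OF \<open>r > 0\<close> \<open>r < b\<close>] by blast
      qed
    qed
  qed
qed

end
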